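(* Let $\Gamma$ be a context of the annotated system, $a$ an annotated term, $S$ an annotated type and $\theta\in\{\downarrow,?\}$. If $\Gamma\Vdash a:S\ \theta$ is derivable in the annotated type checking system, then $|\Gamma|\vdash |a| : |S|\ \theta$ is derivable in the (unannotated) $\mathsf{T}^{\mathsf{eq}\downarrow}$ type assignment system.
   Context: Unannotated $\mathsf{T}^{\mathsf{eq}\downarrow}$. Effects $\theta,\rho ::= \downarrow \mid ?$, ordered by $\theta\le\theta$ and $\downarrow\ \le\ ?$. Types $T ::= \mathsf{nat} \mid \Pi^{\theta} x{:}T.\,T' \mid t = t' \mid \mathsf{Terminates}\ t$. Terms $t ::= x \mid \lambda x.t \mid t\,t' \mid 0 \mid \mathsf{Suc}\,t \mid \mathsf{rec}\ f(x) = t \mid \mathsf{case}\ t\ t'\ t'' \mid \mathsf{join} \mid \mathsf{terminates} \mid \mathsf{contra} \mid \mathsf{abort}$. $[t'/x]$ is capture-avoiding substitution, $\mathrm{fv}$ free variables. Values $v ::= x \mid 0 \mid \mathsf{Suc}\,v \mid \lambda x.t \mid \mathsf{rec}\ f(x)=t \mid \mathsf{join}\mid\mathsf{terminates}\mid\mathsf{contra}$. Evaluation contexts $\mathcal{C} ::= [\,] \mid \mathsf{Suc}\,\mathcal{C} \mid \mathcal{C}\,t \mid v\,\mathcal{C} \mid \mathsf{case}\ \mathcal{C}\ t\ t'$. Reduction: $(\lambda x.t)\,v \leadsto_\beta [v/x]t$; $\mathsf{case}\ 0\ t\ t' \leadsto_\beta t$; $\mathsf{case}\ (\mathsf{Suc}\,v)\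 t\ t' \leadsto_\beta t'\,v$; $(\mathsf{rec}\ f(x)=t)\,v \leadsto_\beta [v/x][\mathsf{rec}\ f(x)=t/f]t$; $\mathcal{C}[t]\leadsto\mathcal{C}[t']$ if $t\leadsto_\beta t'$; $\mathcal{C}[\mathsf{abort}]\leadsto\mathsf{abort}$; $\leadsto^*$ reflexive–transitive closure, $\leadsto^N$ reduction in at most a fixed global bound $N$ of steps. Unannotated judgments ($\Gamma ::= \cdot\mid\Gamma,x{:}T$): $\cdot\vdash\mathsf{Ok}$; $\Gamma,x{:}T\vdash\mathsf{Ok}$ if $\Gamma\vdash\mathsf{Ok}$, $\Gamma\vdash T$. $\Gamma\vdash\mathsf{nat}$ if $\Gamma\vdash\mathsf{Ok}$; $\Gamma\vdash\Pi^\theta x{:}T.T'$ if $\Gamma,x{:}T\vdash T'$; $\Gamma\vdash t=t'$ if $\Gamma\vdash t:T\ ?$, $\Gamma\vdash t':T'\ ?$ for some $T,T'$; $\Gamma\vdash\mathsf{Terminates}\ t$ if $\Gamma\vdash t:T\ ?$ for some $T$. Rules for $\Gamma\vdash t:T\ \theta$ ($\theta$ arbitrary in conclusions unless stated): Var ($\Gamma(x)=T$, $\Gamma\vdash\mathsf{Ok}$ gives $x:T\ \theta$); Join ($t\leadsto^*t_0$, $t'\leadsto^*t_0$, $\Gamma\vdash t:T\ ?$, $\Gamma\vdash t':T'\ ?$ gives $\mathsf{join}:t=t'\ \theta$); Conv ($t:[t_2/x]T\ \theta$, $t':t_1=t_2\ \downarrow$, $\Gamma\vdash[t_1/x]T$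 gives $t:[t_1/x]T\ \theta$); Reflect ($t:T\ ?$, $t':\mathsf{Terminates}\ t\ \downarrow$ gives $t:T\ \theta$); Reify ($t:T\ \downarrow$ gives $\mathsf{terminates}:\mathsf{Terminates}\ t\ \theta$); CtxTerm ($t:\mathsf{Terminates}\ \mathcal{C}[t']\ \theta$ gives $t:\mathsf{Terminates}\ t'\ \theta$); Abs ($\Gamma,x{:}T'\vdash t:T\ \rho$, $\Gamma\vdash\Pi^\rho x{:}T'.T$ gives $\lambda x.t:\Pi^\rho x{:}T'.T\ \theta$); App ($t:\Pi^\rho x{:}T'.T\ \theta$, $t':T'\ \theta$, $\rho\le\theta$ gives $t\,t':[t'/x]T\ \theta$); Zero ($\Gamma\vdash\mathsf{Ok}$ gives $0:\mathsf{nat}\ \theta$); Suc ($t:\mathsf{nat}\ \theta$ gives $\mathsf{Suc}\,t:\mathsf{nat}\ \theta$); Rec ($\Gamma,f{:}\Pi^?x{:}T'.T,x{:}T'\vdash t:T\ ?$ gives $\mathsf{rec}\ f(x)=t:\Pi^?x{:}T'.T\ \theta$); RecNat ($p\notin\mathrm{fv}(t)$, $\Gamma,f{:}\Pi^?x{:}\mathsf{nat}.T,x{:}\mathsf{nat},p{:}\Pi^\downarrow x_1{:}\mathsf{nat}.\Pi^\downarrow p'{:}(x=\mathsf{Suc}\,x_1).\mathsf{Terminates}\ (f\,x_1)\vdash t:T\ \downarrow$ gives $\mathsf{rec}\ f(x)=t:\Pi^\downarrow x{:}\mathsf{nat}.T\ \theta$); Case ($t:\mathsf{nat}\ \theta$,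 $t':[0/x]T\ \theta$, $t'':\Pi^\rho x'{:}\mathsf{nat}.[\mathsf{Suc}\,x'/x]T\ \theta$, $\rho\le\theta$ gives $\mathsf{case}\ t\ t'\ t'':[t/x]T\ \theta$); Contra ($t:0=\mathsf{Suc}\,t'\ \downarrow$ gives $\mathsf{contra}:T\ \theta$); Abort ($\Gamma\vdash\mathsf{Ok}$ gives $\mathsf{abort}:T\ ?$). Annotated system. Types $S ::= \mathsf{nat}\mid\Pi^\theta x{:}S.S'\mid a=a'\mid\mathsf{Terminates}\ a$. Terms $a ::= x\mid a\,a'\mid\lambda^\theta x{:}S.a\mid 0\mid\mathsf{Suc}\,a\mid\mathsf{rec}_{\mathsf{nat}}\ f(x\ p):S=a\mid\mathsf{rec}\ f(x{:}S):S'=a\mid\mathsf{case}\ x.S\ a\ a'\ a''\mid\mathsf{join}\ a\ a'\mid\mathsf{conv}\ x.S\ a\ a'\mid\mathsf{terminates}\ a\mid\mathsf{reflect}\ a\ a'\mid\mathsf{inv}\ a\ a'\mid\mathsf{contra}\ S\ a\mid\mathsf{abort}\ S$. Erasure $|\cdot|$: homomorphic on types ($|\Pi^\theta x{:}S.S'|=\Pi^\theta x{:}|S|.|S'|$, etc.) and on $x$, application, $0$, $\mathsf{Suc}$; $|\lambda^\theta x{:}S.a|=\lambda x.|a|$; $|\mathsf{case}\ x.S\ a\ a'\ a''|=\mathsf{case}\ |a|\ |a'|\ |a''|$; both recursion forms erase to $\mathsf{rec}\ f(x)=|a|$; $|\mathsf{join}\ a\ a'|=\mathsf{join}$, $|\mathsf{terminates}\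 a|=\mathsf{terminates}$, $|\mathsf{contra}\ S\ a|=\mathsf{contra}$, $|\mathsf{abort}\ S|=\mathsf{abort}$; $|\mathsf{conv}\ x.S\ a\ a'|=|\mathsf{reflect}\ a\ a'|=|\mathsf{inv}\ a\ a'|=|a|$. Contexts $\Gamma ::= \cdot\mid\Gamma,x{:}S$, erased pointwise. Annotated judgments: $\cdot\Vdash\mathsf{Ok}$; $\Gamma,x{:}S\Vdash\mathsf{Ok}$ if $\Gamma\Vdash\mathsf{Ok}$, $\Gamma\Vdash S$. $\Gamma\Vdash\mathsf{nat}$ if $\Gamma\Vdash\mathsf{Ok}$; $\Gamma\Vdash\Pi^\theta x{:}S.S'$ if $\Gamma\Vdash S$ and $\Gamma,x{:}S\Vdash S'$; $\Gamma\Vdash a=a'$ if $\Gamma\Vdash a:S\ ?$, $\Gamma\Vdash a':S'\ ?$, $\Gamma\Vdash S$, $\Gamma\Vdash S'$; $\Gamma\Vdash\mathsf{Terminates}\ a$ if $\Gamma\Vdash a:S\ ?$. Rules for $\Gamma\Vdash a:S\ \theta$ ($\theta$ arbitrary in conclusions unless stated): A_Var ($\Gamma(x)=S$, $\Gamma\Vdash\mathsf{Ok}$ gives $x:S\ \theta$); A_Join ($|a|\leadsto^N t$, $|a'|\leadsto^N t$, $a:S\ ?$, $a':S'\ ?$ gives $\mathsf{join}\ a\ a':a=a'\ \theta$); A_Conv ($a:[a_2/x]S\ \theta$, $a':a_1=a_2\ \downarrow$, $\Gamma\Vdash[a_1/x]S$ gives $\mathsf{conv}\ x.S\ a\ a':[a_1/x]S\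 \theta$); A_Reflect ($a:S\ ?$, $a':\mathsf{Terminates}\ a\ \downarrow$ gives $\mathsf{reflect}\ a\ a':S\ \theta$); A_Reify ($a:S\ \downarrow$ gives $\mathsf{terminates}\ a:\mathsf{Terminates}\ a\ \theta$); A_CtxTerm ($a:\mathsf{Terminates}\ a''\ \theta$ and $|a''|=\mathcal{C}[|a'|]$ for some evaluation context $\mathcal{C}$ gives $\mathsf{inv}\ a\ a':\mathsf{Terminates}\ a'\ \theta$); A_Abs ($\Gamma,x{:}S'\Vdash a:S\ \rho$, $\Gamma\Vdash\Pi^\rho x{:}S'.S$ gives $\lambda^\rho x{:}S'.a:\Pi^\rho x{:}S'.S\ \theta$); A_App ($a:\Pi^\rho x{:}S'.S\ \theta$, $a':S'\ \theta$, $\rho\le\theta$ gives $a\,a':[a'/x]S\ \theta$); A_Zero ($\Gamma\Vdash\mathsf{Ok}$ gives $0:\mathsf{nat}\ \theta$); A_Suc; A_Rec ($\Gamma,f{:}\Pi^?x{:}S'.S,x{:}S'\Vdash a:S\ ?$ gives $\mathsf{rec}\ f(x{:}S'):S=a:\Pi^?x{:}S'.S\ \theta$); A_RecNat ($p\notin\mathrm{fv}(a)$, $\Gamma,f{:}\Pi^?x{:}\mathsf{nat}.S,x{:}\mathsf{nat},p{:}\Pi^\downarrow x_1{:}\mathsf{nat}.\Pi^\downarrow p'{:}(x=\mathsf{Suc}\,x_1).\mathsf{Terminates}\ (f\,x_1)\Vdash a:S\ \downarrow$ gives $\mathsf{rec}_{\mathsf{nat}}\ f(x\ p):S=a:\Pi^\downarrow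 x{:}\mathsf{nat}.S\ \theta$); A_Case ($a:\mathsf{nat}\ \theta$, $a':[0/x]S\ \theta$, $a'':\Pi^\rho x'{:}\mathsf{nat}.[\mathsf{Suc}\,x'/x]S\ \theta$, $\rho\le\theta$ gives $\mathsf{case}\ x.S\ a\ a'\ a'':[a/x]S\ \theta$); A_Contra ($a:0=\mathsf{Suc}\,a'\ \downarrow$ gives $\mathsf{contra}\ S\ a:S\ \theta$); A_Abort ($\Gamma\Vdash\mathsf{Ok}$ gives $\mathsf{abort}\ S:S\ ?$). *)

theory Defs
  imports Main
begin

datatype eff = Down | Q   (* Down = terminating (\<down>), Q = possibly diverging (?) *)

fun eff_le :: "eff \<Rightarrow> eff \<Rightarrow> bool" where
  "eff_le Down _ = True"
| "eff_le Q Q = True"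
| "eff_le Q Down = False"

(*   Rec t binds two variables: in t, index 0 = x, index 1 = f.           *)

datatype tm =
    Var nat
  | Lam tm
  | App tm tm
  | Zero
  | TSuc tm
  | Rec tm
  | Case tm tm tm
  | Join
  | Terminates
  | Contra
  | Abort

datatype ty =
    Nat
  | Pi eff ty ty
  | Eq tm tm
  | Term tm

primrec tlift :: "nat \<Rightarrow> nat \<Rightarrow> tm \<Rightarrow> tm" where
  "tlift k c (Var i) = (if c \<le> i then Var (i + k) else Var i)"
| "tlift k c (Lam t) = Lam (tlift k (Suc c) t)"
| "tlift k c (App t u) = App (tlift k c t) (tlift k c u)"
| "tlift k c Zero = Zero"
| "tlift k c (TSuc t) = TSuc (tlift k c t)"
| "tlift k c (Rec t) = Rec (tlift k (c + 2) t)"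
| "tlift k c (Case t u w) = Case (tlift k c t) (tlift k c u) (tlift k c w)"
| "tlift k c Join = Join"
| "tlift k c Terminates = Terminates"
| "tlift k c Contra = Contra"
| "tlift k c Abort = Abort"

primrec tsubst :: "nat \<Rightarrow> tm \<Rightarrow> tm \<Rightarrow> tm" where
  "tsubst j s (Var i) = (if i = j then s else if j < i then Var (i - 1) else Var i)"
| "tsubst j s (Lam t) = Lam (tsubst (Suc j) (tlift 1 0 s) t)"
| "tsubst j s (App t u) = App (tsubst j s t) (tsubst j s u)"
| "tsubst j s Zero = Zero"
| "tsubst j s (TSuc t) = TSuc (tsubst j s t)"
| "tsubst j s (Rec t) = Rec (tsubst (j + 2) (tlift 2 0 s) t)"
| "tsubst j s (Case t u w) = Case (tsubst j s t) (tsubst j s u) (tsubst j s w)"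
| "tsubst j s Join = Join"
| "tsubst j s Terminates = Terminates"
| "tsubst j s Contra = Contra"
| "tsubst j s Abort = Abort"

primrec tylift :: "nat \<Rightarrow> nat \<Rightarrow> ty \<Rightarrow> ty" where
  "tylift k c Nat = Nat"
| "tylift k c (Pi e A B) = Pi e (tylift k c A) (tylift k (Suc c) B)"
| "tylift k c (Eq t u) = Eq (tlift k c t) (tlift k c u)"
| "tylift k c (Term t) = Term (tlift k c t)"

primrec tysubst :: "nat \<Rightarrow> tm \<Rightarrow> ty \<Rightarrow> ty" where
  "tysubst j s Nat = Nat"
| "tysubst j s (Pi e A B) = Pi e (tysubst j s A) (tysubst (Suc j) (tlift 1 0 s) B)"
| "tysubst j s (Eq t u) = Eq (tsubst j s t) (tsubst j s u)"
| "tysubst j s (Term t) = Term (tsubst j s t)"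

inductive is_value :: "tm \<Rightarrow> bool" where
  "is_value (Var i)"
| "is_value Zero"
| "is_value v \<Longrightarrow> is_value (TSuc v)"
| "is_value (Lam t)"
| "is_value (Rec t)"
| "is_value Join"
| "is_value Terminates"
| "is_value Contra"

datatype ectx =
    Hole
  | CSuc ectx
  | CAppL ectx tm
  | CAppR tm ectx
  | CCase ectx tm tm

primrec fill :: "ectx \<Rightarrow> tm \<Rightarrow> tm" where
  "fill Hole t = t"
| "fill (CSuc C) t = TSuc (fill C t)"
| "fill (CAppL C u) t = App (fill C t) u"
| "fill (CAppR v C) t = App v (fill C t)"
| "fill (CCase C u w) t = Case (fill C t) u w"

primrec is_ectx :: "ectx \<Rightarrow> bool" where
  "is_ectx Hole = True"
| "is_ectx (CSuc C) = is_ectx C"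
| "is_ectx (CAppL C u) = is_ectx C"
| "is_ectx (CAppR v C) = (is_value v \<and> is_ectx C)"
| "is_ectx (CCase C u w) = is_ectx C"

inductive beta :: "tm \<Rightarrow> tm \<Rightarrow> bool" where
  beta_lam: "is_value v \<Longrightarrow> beta (App (Lam t) v) (tsubst 0 v t)"
| beta_case0: "beta (Case Zero t u) t"
| beta_caseS: "is_value v \<Longrightarrow> beta (Case (TSuc v) t u) (App u v)"
| beta_rec: "is_value v \<Longrightarrow>
     beta (App (Rec t) v) (tsubst 0 v (tsubst 1 (tlift 1 0 (Rec t)) t))"

inductive step :: "tm \<Rightarrow> tm \<Rightarrow> bool" where
  step_ctx: "beta t t' \<Longrightarrow> is_ectx C \<Longrightarrow> step (fill C t) (fill C t')"
| step_abort: "is_ectx C \<Longrightarrow> step (fill C Abort) Abort"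

definition steps_le :: "nat \<Rightarrow> tm \<Rightarrow> tm \<Rightarrow> bool" where
  "steps_le N t t' \<longleftrightarrow> (\<exists>k\<le>N. (step ^^ k) t t')"

(* Contexts: lists, head = most recently bound variable (index 0);
   each entry is a type in the context of the tail. *)
type_synonym ctx = "ty list"

definition lookup :: "ctx \<Rightarrow> nat \<Rightarrow> ty" where
  "lookup G i = tylift (Suc i) 0 (G ! i)"

(* type of the termination-hypothesis p in RecNat, in context G,f,x
   (x = index 0, f = index 1):  \<Pi>\<down> x1:nat. \<Pi>\<down> p':(x = Suc x1). Terminates (f x1) *)
definition recnat_hyp :: ty where
  "recnat_hyp = Pi Down Nat (Pi Down (Eq (Var 1) (TSuc (Var 0))) (Term (App (Var 3) (Var 1))))"

inductive
  ctx_ok :: "ctx \<Rightarrow> bool" and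
  ty_wf :: "ctx \<Rightarrow> ty \<Rightarrow> bool" and
  has_type :: "ctx \<Rightarrow> tm \<Rightarrow> ty \<Rightarrow> eff \<Rightarrow> bool"
where
  ok_nil: "ctx_ok []"
| ok_cons: "ctx_ok G \<Longrightarrow> ty_wf G T \<Longrightarrow> ctx_ok (T # G)"
| wf_nat: "ctx_ok G \<Longrightarrow> ty_wf G Nat"
| wf_pi: "ty_wf (T # G) T' \<Longrightarrow> ty_wf G (Pi th T T')"
| wf_eq: "has_type G t T Q \<Longrightarrow> has_type G t' T' Q \<Longrightarrow> ty_wf G (Eq t t')"
| wf_term: "has_type G t T Q \<Longrightarrow> ty_wf G (Term t)"
| T_Var: "i < length G \<Longrightarrow> ctx_ok G \<Longrightarrow> has_type G (Var i) (lookup G i) th"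
| T_Join: "(step\<^sup>*\<^sup>*) t t0 \<Longrightarrow> (step\<^sup>*\<^sup>*) t' t0 \<Longrightarrow> has_type G t T Q \<Longrightarrow> has_type G t' T' Q
            \<Longrightarrow> has_type G Join (Eq t t') th"
| T_Conv: "has_type G t (tysubst 0 t2 T) th \<Longrightarrow> has_type G t' (Eq t1 t2) Down
            \<Longrightarrow> ty_wf G (tysubst 0 t1 T) \<Longrightarrow> has_type G t (tysubst 0 t1 T) th"
| T_Reflect: "has_type G t T Q \<Longrightarrow> has_type G t' (Term t) Down \<Longrightarrow> has_type G t T th"
| T_Reify: "has_type G t T Down \<Longrightarrow> has_type G Terminates (Term t) th"
| T_CtxTerm: "has_type G t (Term (fill C t')) th \<Longrightarrow> is_ectx C \<Longrightarrow> has_type G t (Term t') th"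
| T_Abs: "has_type (T' # G) t T rho \<Longrightarrow> ty_wf G (Pi rho T' T) \<Longrightarrow> has_type G (Lam t) (Pi rho T' T) th"
| T_App: "has_type G t (Pi rho T' T) th \<Longrightarrow> has_type G t' T' th \<Longrightarrow> eff_le rho th
            \<Longrightarrow> has_type G (App t t') (tysubst 0 t' T) th"
| T_Zero: "ctx_ok G \<Longrightarrow> has_type G Zero Nat th"
| T_Suc: "has_type G t Nat th \<Longrightarrow> has_type G (TSuc t) Nat th"
| T_Rec: "has_type (tylift 1 0 T' # Pi Q T' T # G) t (tylift 1 1 T) Q
            \<Longrightarrow> has_type G (Rec t) (Pi Q T' T) th"
| T_RecNat: "has_type (recnat_hyp # Nat # Pi Q Nat T # G) (tlift 1 0 t) (tylift 1 2 (tylift 1 0 T)) Down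
            \<Longrightarrow> has_type G (Rec t) (Pi Down Nat T) th"
| T_Case: "has_type G t Nat th \<Longrightarrow> has_type G t' (tysubst 0 Zero T) th
            \<Longrightarrow> has_type G t'' (Pi rho Nat (tysubst 0 (TSuc (Var 0)) (tylift 1 1 T))) th
            \<Longrightarrow> eff_le rho th \<Longrightarrow> has_type G (Case t t' t'') (tysubst 0 t T) th"
| T_Contra: "has_type G t (Eq Zero (TSuc t')) Down \<Longrightarrow> has_type G Contra T th"
| T_Abort: "ctx_ok G \<Longrightarrow> has_type G Abort T Q"

(*   ARecNat S a      : rec_nat f(x p):S = a ; S under x, a under f,x     *)
(*                      (p \<notin> fv(a), so a is not bound over p)            *)
(*   ARec S' S a      : rec f(x:S'):S = a ; S under x, a under f,x        *)
(*   ACase S a a' a'' : case x.S ... ; S under x                          *)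
(*   AConv S a a'     : conv x.S a a' ; S under x                         *)

datatype aty =
    ANat
  | APi eff aty aty
  | AEq atm atm
  | ATerm atm
and atm =
    AVar nat
  | AApp atm atm
  | ALam eff aty atm
  | AZero
  | ASuc atm
  | ARecNat aty atm
  | ARec aty aty atm
  | ACase aty atm atm atm
  | AJoin atm atm
  | AConv aty atm atm
  | ATerminates atm
  | AReflect atm atm
  | AInv atm atm
  | AContra aty atm
  | AAbort aty

primrec alift_ty :: "nat \<Rightarrow> nat \<Rightarrow> aty \<Rightarrow> aty"
  and alift :: "nat \<Rightarrow> nat \<Rightarrow> atm \<Rightarrow> atm" where
  "alift_ty k c ANat = ANat"
| "alift_ty k c (APi e A B) = APi e (alift_ty k c A) (alift_ty k (Suc c) B)"
| "alift_ty k c (AEq a b) = AEq (alift k c a) (alift k c b)"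
| "alift_ty k c (ATerm a) = ATerm (alift k c a)"
| "alift k c (AVar i) = (if c \<le> i then AVar (i + k) else AVar i)"
| "alift k c (AApp a b) = AApp (alift k c a) (alift k c b)"
| "alift k c (ALam e S a) = ALam e (alift_ty k c S) (alift k (Suc c) a)"
| "alift k c AZero = AZero"
| "alift k c (ASuc a) = ASuc (alift k c a)"
| "alift k c (ARecNat S a) = ARecNat (alift_ty k (Suc c) S) (alift k (c + 2) a)"
| "alift k c (ARec S' S a) = ARec (alift_ty k c S') (alift_ty k (Suc c) S) (alift k (c + 2) a)"
| "alift k c (ACase S a b d) = ACase (alift_ty k (Suc c) S) (alift k c a) (alift k c b) (alift k c d)"
| "alift k c (AJoin a b) = AJoin (alift k c a) (alift k c b)"
| "alift k c (AConv S a b) = AConv (alift_ty k (Suc c) S) (alift k c a) (alift k c b)"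
| "alift k c (ATerminates a) = ATerminates (alift k c a)"
| "alift k c (AReflect a b) = AReflect (alift k c a) (alift k c b)"
| "alift k c (AInv a b) = AInv (alift k c a) (alift k c b)"
| "alift k c (AContra S a) = AContra (alift_ty k c S) (alift k c a)"
| "alift k c (AAbort S) = AAbort (alift_ty k c S)"

primrec asubst_ty :: "nat \<Rightarrow> atm \<Rightarrow> aty \<Rightarrow> aty"
  and asubst :: "nat \<Rightarrow> atm \<Rightarrow> atm \<Rightarrow> atm" where
  "asubst_ty j s ANat = ANat"
| "asubst_ty j s (APi e A B) = APi e (asubst_ty j s A) (asubst_ty (Suc j) (alift 1 0 s) B)"
| "asubst_ty j s (AEq a b) = AEq (asubst j s a) (asubst j s b)"
| "asubst_ty j s (ATerm a) = ATerm (asubst j s a)"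
| "asubst j s (AVar i) = (if i = j then s else if j < i then AVar (i - 1) else AVar i)"
| "asubst j s (AApp a b) = AApp (asubst j s a) (asubst j s b)"
| "asubst j s (ALam e S a) = ALam e (asubst_ty j s S) (asubst (Suc j) (alift 1 0 s) a)"
| "asubst j s AZero = AZero"
| "asubst j s (ASuc a) = ASuc (asubst j s a)"
| "asubst j s (ARecNat S a) =
     ARecNat (asubst_ty (Suc j) (alift 1 0 s) S) (asubst (j + 2) (alift 2 0 s) a)"
| "asubst j s (ARec S' S a) =
     ARec (asubst_ty j s S') (asubst_ty (Suc j) (alift 1 0 s) S) (asubst (j + 2) (alift 2 0 s) a)"
| "asubst j s (ACase S a b d) =
     ACase (asubst_ty (Suc j) (alift 1 0 s) S) (asubst j s a) (asubst j s b) (asubst j s d)"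
| "asubst j s (AJoin a b) = AJoin (asubst j s a) (asubst j s b)"
| "asubst j s (AConv S a b) = AConv (asubst_ty (Suc j) (alift 1 0 s) S) (asubst j s a) (asubst j s b)"
| "asubst j s (ATerminates a) = ATerminates (asubst j s a)"
| "asubst j s (AReflect a b) = AReflect (asubst j s a) (asubst j s b)"
| "asubst j s (AInv a b) = AInv (asubst j s a) (asubst j s b)"
| "asubst j s (AContra S a) = AContra (asubst_ty j s S) (asubst j s a)"
| "asubst j s (AAbort S) = AAbort (asubst_ty j s S)"

primrec erase_ty :: "aty \<Rightarrow> ty"
  and erase :: "atm \<Rightarrow> tm" where
  "erase_ty ANat = Nat"
| "erase_ty (APi e A B) = Pi e (erase_ty A) (erase_ty B)"
| "erase_ty (AEq a b) = Eq (erase a) (erase b)"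
| "erase_ty (ATerm a) = Term (erase a)"
| "erase (AVar i) = Var i"
| "erase (AApp a b) = App (erase a) (erase b)"
| "erase (ALam e S a) = Lam (erase a)"
| "erase AZero = Zero"
| "erase (ASuc a) = TSuc (erase a)"
| "erase (ARecNat S a) = Rec (erase a)"
| "erase (ARec S' S a) = Rec (erase a)"
| "erase (ACase S a b d) = Case (erase a) (erase b) (erase d)"
| "erase (AJoin a b) = Join"
| "erase (AConv S a b) = erase a"
| "erase (ATerminates a) = Terminates"
| "erase (AReflect a b) = erase a"
| "erase (AInv a b) = erase a"
| "erase (AContra S a) = Contra"
| "erase (AAbort S) = Abort"

type_synonym actx = "aty list"

definition erase_ctx :: "actx \<Rightarrow> ctx" where
  "erase_ctx G = map erase_ty G"

definition alookup :: "actx \<Rightarrow> nat \<Rightarrow> aty" where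
  "alookup G i = alift_ty (Suc i) 0 (G ! i)"

definition arecnat_hyp :: aty where
  "arecnat_hyp = APi Down ANat (APi Down (AEq (AVar 1) (ASuc (AVar 0))) (ATerm (AApp (AVar 3) (AVar 1))))"

inductive
  aok :: "nat \<Rightarrow> actx \<Rightarrow> bool" and
  awf :: "nat \<Rightarrow> actx \<Rightarrow> aty \<Rightarrow> bool" and
  atyp :: "nat \<Rightarrow> actx \<Rightarrow> atm \<Rightarrow> aty \<Rightarrow> eff \<Rightarrow> bool"
  for N :: nat
where
  aok_nil: "aok N []"
| aok_cons: "aok N G \<Longrightarrow> awf N G S \<Longrightarrow> aok N (S # G)"
| awf_nat: "aok N G \<Longrightarrow> awf N G ANat"
| awf_pi: "awf N G S \<Longrightarrow> awf N (S # G) S' \<Longrightarrow> awf N G (APi th S S')"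
| awf_eq: "atyp N G a S Q \<Longrightarrow> atyp N G a' S' Q \<Longrightarrow> awf N G S \<Longrightarrow> awf N G S'
            \<Longrightarrow> awf N G (AEq a a')"
| awf_term: "atyp N G a S Q \<Longrightarrow> awf N G (ATerm a)"
| A_Var: "i < length G \<Longrightarrow> aok N G \<Longrightarrow> atyp N G (AVar i) (alookup G i) th"
| A_Join: "steps_le N (erase a) t \<Longrightarrow> steps_le N (erase a') t
            \<Longrightarrow> atyp N G a S Q \<Longrightarrow> atyp N G a' S' Q
            \<Longrightarrow> atyp N G (AJoin a a') (AEq a a') th"
| A_Conv: "atyp N G a (asubst_ty 0 a2 S) th \<Longrightarrow> atyp N G a' (AEq a1 a2) Down
            \<Longrightarrow> awf N G (asubst_ty 0 a1 S) \<Longrightarrow> atyp N G (AConv S a a') (asubst_ty 0 a1 S) th"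
| A_Reflect: "atyp N G a S Q \<Longrightarrow> atyp N G a' (ATerm a) Down \<Longrightarrow> atyp N G (AReflect a a') S th"
| A_Reify: "atyp N G a S Down \<Longrightarrow> atyp N G (ATerminates a) (ATerm a) th"
| A_CtxTerm: "atyp N G a (ATerm a'') th \<Longrightarrow> is_ectx C \<Longrightarrow> erase a'' = fill C (erase a')
            \<Longrightarrow> atyp N G (AInv a a') (ATerm a') th"
| A_Abs: "atyp N (S' # G) a S rho \<Longrightarrow> awf N G (APi rho S' S)
            \<Longrightarrow> atyp N G (ALam rho S' a) (APi rho S' S) th"
| A_App: "atyp N G a (APi rho S' S) th \<Longrightarrow> atyp N G a' S' th \<Longrightarrow> eff_le rho th
            \<Longrightarrow> atyp N G (AApp a a') (asubst_ty 0 a' S) th"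
| A_Zero: "aok N G \<Longrightarrow> atyp N G AZero ANat th"
| A_Suc: "atyp N G a ANat th \<Longrightarrow> atyp N G (ASuc a) ANat th"
| A_Rec: "atyp N (alift_ty 1 0 S' # APi Q S' S # G) a (alift_ty 1 1 S) Q
            \<Longrightarrow> atyp N G (ARec S' S a) (APi Q S' S) th"
| A_RecNat: "atyp N (arecnat_hyp # ANat # APi Q ANat S # G) (alift 1 0 a)
               (alift_ty 1 2 (alift_ty 1 0 S)) Down
            \<Longrightarrow> atyp N G (ARecNat S a) (APi Down ANat S) th"
| A_Case: "atyp N G a ANat th \<Longrightarrow> atyp N G a' (asubst_ty 0 AZero S) th
            \<Longrightarrow> atyp N G a'' (APi rho ANat (asubst_ty 0 (ASuc (AVar 0)) (alift_ty 1 1 S))) th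
            \<Longrightarrow> eff_le rho th \<Longrightarrow> atyp N G (ACase S a a' a'') (asubst_ty 0 a S) th"
| A_Contra: "atyp N G a (AEq AZero (ASuc a')) Down \<Longrightarrow> atyp N G (AContra S a) S th"
| A_Abort: "aok N G \<Longrightarrow> atyp N G (AAbort S) S Q"

end

theory Submission
  imports Defs
begin

lemma erase_lift:
  "erase_ty (alift_ty k c S) = tylift k c (erase_ty S)"
  "erase (alift k c a) = tlift k c (erase a)"
  by (induction S and a arbitrary: c and c) auto

lemma erase_subst:
  "erase_ty (asubst_ty j s S) = tysubst j (erase s) (erase_ty S)"
  "erase (asubst j s a) = tsubst j (erase s) (erase a)"
  by (induction S and a arbitrary: j s and j s) (auto simp: erase_lift)

lemma steps_le_rt: "steps_le N t t' \<Longrightarrow> step\<^sup>*\<^sup>* t t'"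
  unfolding steps_le_def by (auto intro: relpowp_imp_rtranclp)

lemma erase_lookup: "erase_ty (alookup G i) = lookup (erase_ctx G) i" if "i < length G"
  using that by (simp add: alookup_def lookup_def erase_ctx_def erase_lift)

lemma erase_hyp: "erase_ty arecnat_hyp = recnat_hyp"
  by (simp add: arecnat_hyp_def recnat_hyp_def)

lemma main:
  "aok N G \<Longrightarrow> ctx_ok (erase_ctx G)"
  "awf N G S \<Longrightarrow> ty_wf (erase_ctx G) (erase_ty S)"
  "atyp N G a S th \<Longrightarrow> has_type (erase_ctx G) (erase a) (erase_ty S) th"
proof (induction rule: aok_awf_atyp.inducts)
  case aok_nil then show ?case by (simp add: erase_ctx_def ok_nil)
next
  case (aok_cons G S) then show ?case by (simp add: erase_ctx_def ok_cons)
next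
  case (awf_nat G) then show ?case by (simp add: wf_nat)
next
  case (awf_pi G S S' th) then show ?case by (simp add: erase_ctx_def wf_pi)
next
  case (awf_eq G a S a' S') then show ?case by (auto intro: wf_eq)
next
  case (awf_term G a S) then show ?case by (auto intro: wf_term)
next
  case (A_Var i G th) then show ?case
    by (simp add: erase_lookup) (metis T_Var erase_ctx_def length_map)
next
  case (A_Join a t a' G S S' th) then show ?case
    by (auto intro: T_Join steps_le_rt)
next
  case (A_Conv G a a2 S th a' a1) then show ?case
    by (auto simp: erase_subst intro: T_Conv)
next
  case (A_Reflect G a S a' th) then show ?case by (auto intro: T_Reflect)
next
  case (A_Reify G a S th) then show ?case by (auto intro: T_Reify)
next
  case (A_CtxTerm G a a'' th C a') then show ?case by (auto intro: T_CtxTerm)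
next
  case (A_Abs S' G a S rho th) then show ?case by (auto simp: erase_ctx_def intro: T_Abs)
next
  case (A_App G a rho S' S th a') then show ?case by (auto simp: erase_subst intro: T_App)
next
  case (A_Zero G th) then show ?case by (auto intro: T_Zero)
next
  case (A_Suc G a th) then show ?case by (auto intro: T_Suc)
next
  case (A_Rec S' S G a th) then show ?case
    by (auto simp: erase_ctx_def erase_lift intro: T_Rec)
next
  case (A_RecNat S G a th) then show ?case
    by (auto simp: erase_ctx_def erase_lift erase_hyp intro: T_RecNat)
next
  case (A_Case G a th a' S a'' rho) then show ?case
    by (auto simp: erase_subst erase_lift intro!: T_Case)
next
  case (A_Contra G a a' S th) then show ?case by (auto intro: T_Contra)
next
  case (A_Abort G S) then show ?case by (auto intro: T_Abort)
qed

theorem proposition1: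
  fixes N :: nat and G :: actx and a :: atm and S :: aty and th :: eff
  assumes "atyp N G a S th"
  shows "has_type (erase_ctx G) (erase a) (erase_ty S) th"
  using main(3)[OF assms] .

end
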